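(* Fix $\tau$ with $0<\tau\le\frac1{8d^2}$ and a slack vector $\nu$ with $\|\nu\|_\infty\le\frac1{4d}$. (1) If $\Gamma\in\mathbb L_2^\nu$, then there exists $\Gamma'\in\mathbb L_2$ such that $\Gamma'_i(x_i)\ge\tau$ for all $i\in\mathcal V$, $x_i\in\chi$, $\Gamma'_{ij}(x_i,x_j)\ge\tau$ for all $ij\in\mathcal E$, $x_i,x_j\in\chi$, and $\|\Gamma-\Gamma'\|_1\le2\|\nu\|_1+2(|\mathcal E|+n)d^2\tau$. (2) If $\Gamma\in\mathbb L_2$, then there exists $\Gamma'\in\mathbb L_2^\nu$ such that $\Gamma'_i(x_i)\ge\tau$ for all $i,x_i$, $\Gamma'_{ij}(x_i,x_j)\ge\tau$ for all $ij,x_i,x_j$, and $\|\Gamma-\Gamma'\|_1\le6d\deg(G)\|\nu\|_1+8(|\mathcal E|+n)d^2\tau$.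
   Context: Let $G=(\mathcal V,\mathcal E)$ be a graph with $\mathcal V=\{1,\dots,n\}$, edges ordered pairs $ij$, maximum degree $\deg(G)$, and $\chi=\{0,\dots,d-1\}$; $\Sigma_d$ is the probability simplex in $\mathbb R^d$ and $\mathbb 1$ the all-ones vector. A marginal vector $\Gamma$ consists of $\Gamma_i\in\mathbb R^d$ ($i\in\mathcal V$) and $\Gamma_{ij}\in\mathbb R^{d\times d}$ ($ij\in\mathcal E$); $\|\cdot\|_1$ is the sum of absolute values of all entries and $\|\cdot\|_\infty$ the maximum absolute entry. A slack vector $\nu$ consists of vectors $\nu_{ij},\nu_{ji}\in\mathbb R^d$ for each $ij\in\mathcal E$ with $\nu_{ij}^\top\mathbb 1=\nu_{ji}^\top\mathbb 1=0$. The slack polytope is $\mathbb L_2^\nu=\{\Gamma\ge0:\Gamma_i\in\Sigma_d\ \forall i;\ \Gamma_{ij}\mathbb 1=\Gamma_i+\nu_{ij},\ \Gamma_{ij}^\top\mathbb 1=\Gamma_j+\nu_{ji},\ \mathbb 1^\top\Gamma_{ij}\mathbb 1=1\ \forall ij\in\mathcal E\}$; $\mathbb L_2=\mathbb L_2^0$. *)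

theory Defs
  imports Complex_Main
begin

text \<open>Graph G = (V, E) with V = {1..n}; edges are ordered pairs (i,j); states chi = {0..<d}.
  A marginal vector is a pair (Gv, Ge): Gv i x = Gamma_i(x), Ge i j x y = Gamma_ij(x,y).
  A slack vector is nu with nu i j = nu_ij and nu j i = nu_ji for (i,j) in E.\<close>

definition simple_graph :: "nat \<Rightarrow> (nat \<times> nat) set \<Rightarrow> bool" where
  "simple_graph n E \<longleftrightarrow> E \<subseteq> {1..n} \<times> {1..n} \<and> (\<forall>(i,j)\<in>E. i \<noteq> j \<and> (j,i) \<notin> E)"

definition degree :: "(nat \<times> nat) set \<Rightarrow> nat \<Rightarrow> nat" where
  "degree E i = card {j. (i,j) \<in> E \<or> (j,i) \<in> E}"

definition max_degree :: "nat \<Rightarrow> (nat \<times> nat) set \<Rightarrow> nat" where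
  "max_degree n E = Max (degree E ` {1..n})"

definition in_simplex :: "nat \<Rightarrow> (nat \<Rightarrow> real) \<Rightarrow> bool" where
  "in_simplex d p \<longleftrightarrow> (\<forall>x<d. 0 \<le> p x) \<and> (\<Sum>x<d. p x) = 1"

definition slack_vector :: "(nat \<times> nat) set \<Rightarrow> nat \<Rightarrow> (nat \<Rightarrow> nat \<Rightarrow> nat \<Rightarrow> real) \<Rightarrow> bool" where
  "slack_vector E d \<nu> \<longleftrightarrow> (\<forall>(i,j)\<in>E. (\<Sum>x<d. \<nu> i j x) = 0 \<and> (\<Sum>x<d. \<nu> j i x) = 0)"

definition slack_norm1 :: "(nat \<times> nat) set \<Rightarrow> nat \<Rightarrow> (nat \<Rightarrow> nat \<Rightarrow> nat \<Rightarrow> real) \<Rightarrow> real" where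
  "slack_norm1 E d \<nu> = (\<Sum>(i,j)\<in>E. \<Sum>x<d. \<bar>\<nu> i j x\<bar> + \<bar>\<nu> j i x\<bar>)"

definition in_L2nu :: "nat \<Rightarrow> (nat \<times> nat) set \<Rightarrow> nat \<Rightarrow> (nat \<Rightarrow> nat \<Rightarrow> nat \<Rightarrow> real)
    \<Rightarrow> (nat \<Rightarrow> nat \<Rightarrow> real) \<Rightarrow> (nat \<Rightarrow> nat \<Rightarrow> nat \<Rightarrow> nat \<Rightarrow> real) \<Rightarrow> bool" where
  "in_L2nu n E d \<nu> Gv Ge \<longleftrightarrow>
     (\<forall>i\<in>{1..n}. in_simplex d (Gv i)) \<and>
     (\<forall>(i,j)\<in>E. (\<forall>x<d. \<forall>y<d. 0 \<le> Ge i j x y) \<and>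
        (\<forall>x<d. (\<Sum>y<d. Ge i j x y) = Gv i x + \<nu> i j x) \<and>
        (\<forall>y<d. (\<Sum>x<d. Ge i j x y) = Gv j y + \<nu> j i y) \<and>
        (\<Sum>x<d. \<Sum>y<d. Ge i j x y) = 1)"

definition in_L2 :: "nat \<Rightarrow> (nat \<times> nat) set \<Rightarrow> nat
    \<Rightarrow> (nat \<Rightarrow> nat \<Rightarrow> real) \<Rightarrow> (nat \<Rightarrow> nat \<Rightarrow> nat \<Rightarrow> nat \<Rightarrow> real) \<Rightarrow> bool" where
  "in_L2 n E d Gv Ge \<longleftrightarrow> in_L2nu n E d (\<lambda>_ _ _. 0) Gv Ge"

definition marg_dist1 :: "nat \<Rightarrow> (nat \<times> nat) set \<Rightarrow> nat
    \<Rightarrow> (nat \<Rightarrow> nat \<Rightarrow> real) \<Rightarrow> (nat \<Rightarrow> nat \<Rightarrow> nat \<Rightarrow> nat \<Rightarrow> real)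
    \<Rightarrow> (nat \<Rightarrow> nat \<Rightarrow> real) \<Rightarrow> (nat \<Rightarrow> nat \<Rightarrow> nat \<Rightarrow> nat \<Rightarrow> real) \<Rightarrow> real" where
  "marg_dist1 n E d Gv Ge Gv' Ge' =
     (\<Sum>i\<in>{1..n}. \<Sum>x<d. \<bar>Gv i x - Gv' i x\<bar>) +
     (\<Sum>(i,j)\<in>E. \<Sum>x<d. \<Sum>y<d. \<bar>Ge i j x y - Ge' i j x y\<bar>)"

definition lower_bounded :: "nat \<Rightarrow> (nat \<times> nat) set \<Rightarrow> nat \<Rightarrow> real
    \<Rightarrow> (nat \<Rightarrow> nat \<Rightarrow> real) \<Rightarrow> (nat \<Rightarrow> nat \<Rightarrow> nat \<Rightarrow> nat \<Rightarrow> real) \<Rightarrow> bool" where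
  "lower_bounded n E d \<tau> Gv Ge \<longleftrightarrow>
     (\<forall>i\<in>{1..n}. \<forall>x<d. \<tau> \<le> Gv i x) \<and> (\<forall>(i,j)\<in>E. \<forall>x<d. \<forall>y<d. \<tau> \<le> Ge i j x y)"

end

theory Submission
  imports Defs
begin


lemma transport_fix:
  fixes P :: "nat \<Rightarrow> nat \<Rightarrow> real" and a b a' b' :: "nat \<Rightarrow> real"
  assumes P0: "\<forall>x<d. \<forall>y<d. 0 \<le> P x y"
    and rows: "\<forall>x<d. (\<Sum>y<d. P x y) = a x" and cols: "\<forall>y<d. (\<Sum>x<d. P x y) = b y"
    and a'0: "\<forall>x<d. 0 \<le> a' x" and b'0: "\<forall>y<d. 0 \<le> b' y"
    and sa: "(\<Sum>x<d. a' x) = (\<Sum>x<d. \<Sum>y<d. P x y)"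
    and sb: "(\<Sum>y<d. b' y) = (\<Sum>x<d. \<Sum>y<d. P x y)"
  shows "\<exists>Q. (\<forall>x<d. \<forall>y<d. 0 \<le> Q x y) \<and> (\<forall>x<d. (\<Sum>y<d. Q x y) = a' x)
     \<and> (\<forall>y<d. (\<Sum>x<d. Q x y) = b' y)
     \<and> (\<Sum>x<d. \<Sum>y<d. \<bar>P x y - Q x y\<bar>) \<le> 2 * ((\<Sum>x<d. \<bar>a x - a' x\<bar>) + (\<Sum>y<d. \<bar>b y - b' y\<bar>))"
proof -
  have a0: "0 \<le> a x" if "x < d" for x using rows P0 that by (metis lessThan_iff sum_nonneg)
  have b0: "0 \<le> b y" if "y < d" for y using cols P0 that by (metis lessThan_iff sum_nonneg)
  define \<alpha> where "\<alpha> x = (if a x \<le> a' x then 1 else a' x / a x)" for x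
  define \<beta> where "\<beta> y = (if b y \<le> b' y then 1 else b' y / b y)" for y
  have al: "0 \<le> \<alpha> x \<and> \<alpha> x \<le> 1 \<and> \<alpha> x * a x \<le> a' x \<and> a x * (1 - \<alpha> x) \<le> \<bar>a x - a' x\<bar>" if "x < d" for x
  proof (cases "a x \<le> a' x")
    case True then show ?thesis by (simp add: \<alpha>_def)
  next
    case False
    with a'0 that have "a x > 0" by force
    then show ?thesis using False a'0 that by (auto simp: \<alpha>_def field_simps)
  qed
  have be: "0 \<le> \<beta> y \<and> \<beta> y \<le> 1 \<and> \<beta> y * b y \<le> b' y \<and> b y * (1 - \<beta> y) \<le> \<bar>b y - b' y\<bar>" if "y < d" for y
  proof (cases "b y \<le> b' y")
    case True then show ?thesis by (simp add: \<beta>_def)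
  next
    case False
    with b'0 that have "b y > 0" by force
    then show ?thesis using False b'0 that by (auto simp: \<beta>_def field_simps)
  qed
  define S where "S x y = P x y * \<alpha> x * \<beta> y" for x y
  have S0: "0 \<le> S x y" "S x y \<le> P x y" if "x < d" "y < d" for x y
  proof -
    have "\<alpha> x * \<beta> y \<le> 1" using al[OF that(1)] be[OF that(2)] by (simp add: mult_le_one)
    then have "P x y * (\<alpha> x * \<beta> y) \<le> P x y * 1" using P0 that by (intro mult_left_mono) auto
    then show "S x y \<le> P x y" by (simp add: S_def mult.assoc)
    show "0 \<le> S x y" using P0 al be that by (simp add: S_def)
  qed
  define u where "u x = a' x - (\<Sum>y<d. S x y)" for x
  define v where "v y = b' y - (\<Sum>x<d. S x y)" for y
  have u0: "0 \<le> u x" if "x < d" for x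
  proof -
    have "(\<Sum>y<d. S x y) \<le> (\<Sum>y<d. P x y * \<alpha> x)"
      using that P0 al be by (intro sum_mono) (auto simp: S_def intro!: mult_right_le_one_le mult_nonneg_nonneg)
    also have "\<dots> = \<alpha> x * a x" using rows that by (simp add: sum_distrib_right[symmetric])
    also have "\<dots> \<le> a' x" using al that by simp
    finally show ?thesis by (simp add: u_def)
  qed
  have v0: "0 \<le> v y" if "y < d" for y
  proof -
    have "(\<Sum>x<d. S x y) \<le> (\<Sum>x<d. P x y * \<beta> y)"
    proof (intro sum_mono)
      fix x assume "x \<in> {..<d}"
      then have x: "x < d" by simp
      have "P x y * \<beta> y * \<alpha> x \<le> P x y * \<beta> y"
        using that x P0 al be by (intro mult_right_le_one_le mult_nonneg_nonneg) auto
      then show "S x y \<le> P x y * \<beta> y" by (simp add: S_def mult_ac)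
    qed
    also have "\<dots> = \<beta> y * b y" using cols that by (simp add: sum_distrib_right[symmetric])
    also have "\<dots> \<le> b' y" using be that by simp
    finally show ?thesis by (simp add: v_def)
  qed
  define T where "T = (\<Sum>x<d. \<Sum>y<d. S x y)"
  define PP where "PP = (\<Sum>x<d. \<Sum>y<d. P x y)"
  define D where "D = PP - T"
  have su: "(\<Sum>x<d. u x) = D" using sa by (simp add: u_def sum_subtractf D_def T_def PP_def)
  have swT: "(\<Sum>y<d. \<Sum>x<d. S x y) = T" unfolding T_def by (rule sum.swap)
  have sv: "(\<Sum>y<d. v y) = D" using sb by (simp add: v_def sum_subtractf D_def PP_def swT)
  have D0: "0 \<le> D" using su u0 by (metis lessThan_iff sum_nonneg)
  define Q where "Q x y = S x y + u x * v y / D" for x y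
  have Q0: "\<forall>x<d. \<forall>y<d. 0 \<le> Q x y" using S0 u0 v0 D0 by (auto simp: Q_def)
  have ux: "u x * D / D = u x" if "x < d" for x
  proof (cases "D = 0")
    case True
    then have "u x = 0" using su u0 that by (metis finite_lessThan lessThan_iff sum_nonneg_eq_0_iff)
    then show ?thesis by simp
  qed simp
  have vy: "v y * D / D = v y" if "y < d" for y
  proof (cases "D = 0")
    case True
    then have "v y = 0" using sv v0 that by (metis finite_lessThan lessThan_iff sum_nonneg_eq_0_iff)
    then show ?thesis by simp
  qed simp
  have Qr: "\<forall>x<d. (\<Sum>y<d. Q x y) = a' x"
  proof (intro allI impI)
    fix x assume x: "x < d"
    have "(\<Sum>y<d. Q x y) = (\<Sum>y<d. S x y) + u x * (\<Sum>y<d. v y) / D"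
      by (simp add: Q_def sum.distrib sum_divide_distrib[symmetric] sum_distrib_left)
    also have "\<dots> = a' x" using ux[OF x] sv by (simp add: u_def)
    finally show "(\<Sum>y<d. Q x y) = a' x" .
  qed
  have Qc: "\<forall>y<d. (\<Sum>x<d. Q x y) = b' y"
  proof (intro allI impI)
    fix y assume y: "y < d"
    have "(\<Sum>x<d. Q x y) = (\<Sum>x<d. S x y) + (\<Sum>x<d. u x) * v y / D"
      by (simp add: Q_def sum.distrib sum_divide_distrib[symmetric] sum_distrib_right)
    also have "\<dots> = b' y" using vy[OF y] su by (simp add: v_def mult.commute)
    finally show "(\<Sum>x<d. Q x y) = b' y" .
  qed
  have "(\<Sum>x<d. \<Sum>y<d. \<bar>P x y - Q x y\<bar>) \<le> (\<Sum>x<d. \<Sum>y<d. (P x y - S x y) + u x * v y / D)"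
  proof (intro sum_mono)
    fix x y assume "x \<in> {..<d}" "y \<in> {..<d}"
    then have "x < d" "y < d" by auto
    then show "\<bar>P x y - Q x y\<bar> \<le> (P x y - S x y) + u x * v y / D"
      using S0 u0 v0 D0 by (auto simp: Q_def abs_le_iff)
  qed
  also have "\<dots> = (PP - T) + (\<Sum>x<d. u x) * (\<Sum>y<d. v y) / D"
    by (simp add: PP_def T_def sum.distrib sum_subtractf sum_divide_distrib[symmetric] sum_product)
  also have "\<dots> = D + D * D / D" using su sv D_def by simp
  also have "\<dots> \<le> 2 * D" by (cases "D = 0") auto
  also have "D \<le> (\<Sum>x<d. \<bar>a x - a' x\<bar>) + (\<Sum>y<d. \<bar>b y - b' y\<bar>)"
  proof -
    have "D = (\<Sum>x<d. \<Sum>y<d. P x y * (1 - \<alpha> x * \<beta> y))"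
      by (simp add: D_def PP_def T_def S_def sum_subtractf[symmetric] algebra_simps)
    also have "\<dots> \<le> (\<Sum>x<d. \<Sum>y<d. P x y * (1 - \<alpha> x) + P x y * (1 - \<beta> y))"
    proof (intro sum_mono)
      fix x y assume "x \<in> {..<d}" "y \<in> {..<d}"
      then have xy: "x < d" "y < d" by auto
      have "(1 - \<alpha> x) * (1 - \<beta> y) \<ge> 0" using al[OF xy(1)] be[OF xy(2)] by simp
      then have "1 - \<alpha> x * \<beta> y \<le> (1 - \<alpha> x) + (1 - \<beta> y)" by (simp add: algebra_simps)
      then have "P x y * (1 - \<alpha> x * \<beta> y) \<le> P x y * ((1 - \<alpha> x) + (1 - \<beta> y))"
        using P0 xy by (intro mult_left_mono) auto
      then show "P x y * (1 - \<alpha> x * \<beta> y) \<le> P x y * (1 - \<alpha> x) + P x y * (1 - \<beta> y)"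
        by (simp add: algebra_simps)
    qed
    also have "\<dots> = (\<Sum>x<d. a x * (1 - \<alpha> x)) + (\<Sum>y<d. b y * (1 - \<beta> y))"
    proof -
      have 1: "(\<Sum>x<d. \<Sum>y<d. P x y * (1 - \<alpha> x)) = (\<Sum>x<d. a x * (1 - \<alpha> x))"
        using rows by (simp add: sum_distrib_right[symmetric])
      have 2: "(\<Sum>x<d. \<Sum>y<d. P x y * (1 - \<beta> y)) = (\<Sum>y<d. b y * (1 - \<beta> y))"
      proof -
        have "(\<Sum>x<d. \<Sum>y<d. P x y * (1 - \<beta> y)) = (\<Sum>y<d. \<Sum>x<d. P x y * (1 - \<beta> y))"
          by (rule sum.swap)
        also have "\<dots> = (\<Sum>y<d. b y * (1 - \<beta> y))"
          using cols by (simp add: sum_distrib_right[symmetric])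
        finally show ?thesis .
      qed
      show ?thesis using 1 2 by (simp add: sum.distrib)
    qed
    also have "\<dots> \<le> (\<Sum>x<d. \<bar>a x - a' x\<bar>) + (\<Sum>y<d. \<bar>b y - b' y\<bar>)"
      using al be by (intro add_mono sum_mono) auto
    finally show ?thesis .
  qed
  finally show ?thesis using Q0 Qr Qc by (intro exI[of _ Q]) auto
qed



lemma prod_mix:
  fixes P :: "nat \<Rightarrow> nat \<Rightarrow> real" and ma mb ra rb :: "nat \<Rightarrow> real" and la lb :: real
  assumes P0: "\<forall>x<d. \<forall>y<d. 0 \<le> P x y"
    and rows: "\<forall>x<d. (\<Sum>y<d. P x y) = ma x" and cols: "\<forall>y<d. (\<Sum>x<d. P x y) = mb y"
    and m10: "\<forall>x<d. 0 \<le> ma x" and m20: "\<forall>y<d. 0 \<le> mb y"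
    and s1: "(\<Sum>x<d. ma x) = 1" and s2: "(\<Sum>y<d. mb y) = 1"
    and r10: "\<forall>x<d. 0 \<le> ra x" and r20: "\<forall>y<d. 0 \<le> rb y"
    and sr1: "(\<Sum>x<d. ra x) = la" and sr2: "(\<Sum>y<d. rb y) = lb"
    and la: "la \<le> 1" and lb: "lb \<le> 1"
  defines "P' \<equiv> \<lambda>x y. (1-la)*(1-lb)*P x y + (1-lb)*ra x*mb y + (1-la)*ma x*rb y + ra x*rb y"
  shows "\<forall>x<d. \<forall>y<d. 0 \<le> P' x y"
    and "\<forall>x<d. (\<Sum>y<d. P' x y) = (1-la)*ma x + ra x"
    and "\<forall>y<d. (\<Sum>x<d. P' x y) = (1-lb)*mb y + rb y"
    and "(\<Sum>x<d. \<Sum>y<d. \<bar>P x y - P' x y\<bar>) \<le> 2*(la + lb)"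
proof -
  have l10: "0 \<le> la" using sr1 r10 by (metis lessThan_iff sum_nonneg)
  have l20: "0 \<le> lb" using sr2 r20 by (metis lessThan_iff sum_nonneg)
  show "\<forall>x<d. \<forall>y<d. 0 \<le> P' x y"
    using P0 m10 m20 r10 r20 la lb by (auto simp: P'_def)
  show "\<forall>x<d. (\<Sum>y<d. P' x y) = (1-la)*ma x + ra x"
  proof (intro allI impI)
    fix x assume x: "x < d"
    have "(\<Sum>y<d. P' x y) = (1-la)*(1-lb)*(\<Sum>y<d. P x y) + (1-lb)*ra x*(\<Sum>y<d. mb y)
        + (1-la)*ma x*(\<Sum>y<d. rb y) + ra x*(\<Sum>y<d. rb y)"
      by (simp add: P'_def sum.distrib sum_distrib_left)
    also have "\<dots> = (1-la)*ma x + ra x" using rows x s2 sr2 by (simp add: algebra_simps)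
    finally show "(\<Sum>y<d. P' x y) = (1-la)*ma x + ra x" .
  qed
  show "\<forall>y<d. (\<Sum>x<d. P' x y) = (1-lb)*mb y + rb y"
  proof (intro allI impI)
    fix y assume y: "y < d"
    have "(\<Sum>x<d. P' x y) = (1-la)*(1-lb)*(\<Sum>x<d. P x y) + (1-lb)*(\<Sum>x<d. ra x)*mb y
        + (1-la)*(\<Sum>x<d. ma x)*rb y + (\<Sum>x<d. ra x)*rb y"
      by (simp add: P'_def sum.distrib sum_distrib_left sum_distrib_right)
    also have "\<dots> = (1-lb)*mb y + rb y" using cols y s1 sr1 by (simp add: algebra_simps)
    finally show "(\<Sum>x<d. P' x y) = (1-lb)*mb y + rb y" .
  qed
  have "(\<Sum>x<d. \<Sum>y<d. \<bar>P x y - P' x y\<bar>) \<le>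
     (\<Sum>x<d. \<Sum>y<d. (la+lb-la*lb)*P x y + ((1-lb)*ra x*mb y + (1-la)*ma x*rb y + ra x*rb y))"
  proof (intro sum_mono)
    fix x y assume "x \<in> {..<d}" "y \<in> {..<d}"
    then have xy: "x < d" "y < d" by auto
    have e: "P x y - P' x y = (la+lb-la*lb)*P x y - ((1-lb)*ra x*mb y + (1-la)*ma x*rb y + ra x*rb y)"
      by (simp add: P'_def algebra_simps)
    have A: "0 \<le> (la+lb-la*lb)*P x y"
    proof -
      have "0 \<le> la + lb*(1-la)" using l10 l20 la by simp
      then have "0 \<le> la+lb-la*lb" by (simp add: algebra_simps)
      then show ?thesis using P0 xy by simp
    qed
    have B: "0 \<le> (1-lb)*ra x*mb y + (1-la)*ma x*rb y + ra x*rb y"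
      using xy m10 m20 r10 r20 la lb by simp
    show "\<bar>P x y - P' x y\<bar> \<le> (la+lb-la*lb)*P x y + ((1-lb)*ra x*mb y + (1-la)*ma x*rb y + ra x*rb y)"
      unfolding e using A B by linarith
  qed
  also have "\<dots> = (la+lb-la*lb)*1 + (1-lb)*la*1 + (1-la)*1*lb + la*lb"
  proof -
    have PP: "(\<Sum>x<d. \<Sum>y<d. P x y) = 1" using rows s1 by simp
    have "(\<Sum>x<d. \<Sum>y<d. (la+lb-la*lb)*P x y + ((1-lb)*ra x*mb y + (1-la)*ma x*rb y + ra x*rb y))
      = (la+lb-la*lb)*(\<Sum>x<d. \<Sum>y<d. P x y) + (\<Sum>x<d. ((1-lb)*ra x)*(\<Sum>y<d. mb y))
        + (\<Sum>x<d. ((1-la)*ma x)*(\<Sum>y<d. rb y)) + (\<Sum>x<d. ra x*(\<Sum>y<d. rb y))"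
      by (simp add: sum.distrib sum_distrib_left)
    also have "\<dots> = (la+lb-la*lb)*1 + (\<Sum>x<d. (1-lb)*ra x) + (\<Sum>x<d. (1-la)*ma x * lb) + (\<Sum>x<d. ra x*lb)"
      using PP s2 sr2 by simp
    also have "\<dots> = (la+lb-la*lb)*1 + (1-lb)*la*1 + (1-la)*1*lb + la*lb"
      using s1 sr1 by (simp add: sum_distrib_left[symmetric] sum_distrib_right[symmetric])
    finally show ?thesis .
  qed
  also have "\<dots> = 2*(la+lb) - 2*la*lb" by (simp add: algebra_simps)
  also have "\<dots> \<le> 2*(la+lb)" using l10 l20 by simp
  finally show "(\<Sum>x<d. \<Sum>y<d. \<bar>P x y - P' x y\<bar>) \<le> 2*(la + lb)" .
qed

lemma vert_mix:
  fixes m r :: "nat \<Rightarrow> real"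
  assumes "\<forall>x<d. 0 \<le> m x" "(\<Sum>x<d. m x) = 1" "\<forall>x<d. 0 \<le> r x" "(\<Sum>x<d. r x) = l" "0 \<le> l"
  shows "(\<Sum>x<d. \<bar>m x - ((1-l)*m x + r x)\<bar>) \<le> 2*l"
proof -
  have "(\<Sum>x<d. \<bar>m x - ((1-l)*m x + r x)\<bar>) \<le> (\<Sum>x<d. l * m x + r x)"
  proof (intro sum_mono)
    fix x assume "x \<in> {..<d}"
    then have "0 \<le> m x" "0 \<le> r x" using assms by auto
    then have "0 \<le> l * m x" using assms by simp
    then show "\<bar>m x - ((1-l)*m x + r x)\<bar> \<le> l * m x + r x" using \<open>0 \<le> r x\<close>
      by (simp add: algebra_simps abs_le_iff)
  qed
  also have "\<dots> = 2*l" using assms by (simp add: sum.distrib sum_distrib_left[symmetric])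
  finally show ?thesis .
qed



lemma dist_tri:
  "marg_dist1 n E d Gv1 Ge1 Gv3 Ge3 \<le> marg_dist1 n E d Gv1 Ge1 Gv2 Ge2 + marg_dist1 n E d Gv2 Ge2 Gv3 Ge3"
proof -
  have 1: "(\<Sum>i\<in>{1..n}. \<Sum>x<d. \<bar>Gv1 i x - Gv3 i x\<bar>) \<le>
     (\<Sum>i\<in>{1..n}. \<Sum>x<d. \<bar>Gv1 i x - Gv2 i x\<bar>) + (\<Sum>i\<in>{1..n}. \<Sum>x<d. \<bar>Gv2 i x - Gv3 i x\<bar>)"
    unfolding sum.distrib[symmetric] by (intro sum_mono) (rule abs_triangle_ineq[THEN order_trans[rotated]], simp)
  have 2: "(\<Sum>(i,j)\<in>E. \<Sum>x<d. \<Sum>y<d. \<bar>Ge1 i j x y - Ge3 i j x y\<bar>) \<le>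
     (\<Sum>(i,j)\<in>E. \<Sum>x<d. \<Sum>y<d. \<bar>Ge1 i j x y - Ge2 i j x y\<bar>) + (\<Sum>(i,j)\<in>E. \<Sum>x<d. \<Sum>y<d. \<bar>Ge2 i j x y - Ge3 i j x y\<bar>)"
    unfolding sum.distrib[symmetric] split_def by (intro sum_mono) (rule abs_triangle_ineq[THEN order_trans[rotated]], simp)
  show ?thesis using 1 2 unfolding marg_dist1_def by linarith
qed

lemma mix_global:
  assumes L: "in_L2nu n E d \<nu>1 Gv Ge" and l0: "0 \<le> l" and l1: "l \<le> 1" and d: "0 < d"
  defines "Gv' \<equiv> \<lambda>i x. (1-l)*Gv i x + l/real d"
    and "Ge' \<equiv> \<lambda>i j x y. (1-l)*Ge i j x y + l/(real d)^2"
  shows "in_L2nu n E d (\<lambda>i j x. (1-l)*\<nu>1 i j x) Gv' Ge'"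
    and "lower_bounded n E d (l/(real d)^2) Gv' Ge'"
    and "marg_dist1 n E d Gv Ge Gv' Ge' \<le> 2*l*(real (card E) + real n)"
proof -
  have cd: "(\<Sum>x<d. l / real d) = l" using d by simp
  have cd2: "(\<Sum>x<d. l / (real d)^2) = l / real d" using d by (simp add: power2_eq_square)
  have cd3: "(\<Sum>x<d. \<Sum>y<d. l / (real d)^2) = l" using d by (simp add: power2_eq_square)
  have L1: "\<forall>i\<in>{1..n}. (\<forall>x<d. 0 \<le> Gv i x) \<and> (\<Sum>x<d. Gv i x) = 1"
    using L by (auto simp: in_L2nu_def in_simplex_def)
  have L2: "\<forall>(i,j)\<in>E. (\<forall>x<d. \<forall>y<d. 0 \<le> Ge i j x y) \<and>
        (\<forall>x<d. (\<Sum>y<d. Ge i j x y) = Gv i x + \<nu>1 i j x) \<and>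
        (\<forall>y<d. (\<Sum>x<d. Ge i j x y) = Gv j y + \<nu>1 j i y) \<and>
        (\<Sum>x<d. \<Sum>y<d. Ge i j x y) = 1"
    using L by (auto simp: in_L2nu_def)
  show "in_L2nu n E d (\<lambda>i j x. (1-l)*\<nu>1 i j x) Gv' Ge'"
    unfolding in_L2nu_def in_simplex_def
  proof (rule conjI; intro ballI)
    fix i assume i: "i \<in> {1..n}"
    show "(\<forall>x<d. 0 \<le> Gv' i x) \<and> (\<Sum>x<d. Gv' i x) = 1"
      using L1 i l0 l1 cd by (auto simp: Gv'_def sum.distrib sum_distrib_left[symmetric])
  next
    fix p assume p: "p \<in> E"
    obtain i j where ij: "p = (i,j)" by force
    from L2 p ij have A: "(\<forall>x<d. \<forall>y<d. 0 \<le> Ge i j x y) \<and>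
        (\<forall>x<d. (\<Sum>y<d. Ge i j x y) = Gv i x + \<nu>1 i j x) \<and>
        (\<forall>y<d. (\<Sum>x<d. Ge i j x y) = Gv j y + \<nu>1 j i y) \<and>
        (\<Sum>x<d. \<Sum>y<d. Ge i j x y) = 1" by auto
    have "(\<forall>x<d. \<forall>y<d. 0 \<le> Ge' i j x y)" using A l0 l1 by (auto simp: Ge'_def)
    moreover have "\<forall>x<d. (\<Sum>y<d. Ge' i j x y) = Gv' i x + (1-l)*\<nu>1 i j x"
    proof (intro allI impI)
      fix x assume x: "x < d"
      have "(\<Sum>y<d. Ge' i j x y) = (1-l)*(\<Sum>y<d. Ge i j x y) + (\<Sum>y<d. l/(real d)^2)"
        by (simp add: Ge'_def sum.distrib sum_distrib_left)
      then show "(\<Sum>y<d. Ge' i j x y) = Gv' i x + (1-l)*\<nu>1 i j x"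
        using A cd2 x by (simp add: Gv'_def algebra_simps)
    qed
    moreover have "\<forall>y<d. (\<Sum>x<d. Ge' i j x y) = Gv' j y + (1-l)*\<nu>1 j i y"
    proof (intro allI impI)
      fix y assume y: "y < d"
      have "(\<Sum>x<d. Ge' i j x y) = (1-l)*(\<Sum>x<d. Ge i j x y) + (\<Sum>x<d. l/(real d)^2)"
        by (simp add: Ge'_def sum.distrib sum_distrib_left)
      then show "(\<Sum>x<d. Ge' i j x y) = Gv' j y + (1-l)*\<nu>1 j i y"
        using A cd2 y by (simp add: Gv'_def algebra_simps)
    qed
    moreover have "(\<Sum>x<d. \<Sum>y<d. Ge' i j x y) = 1"
    proof -
      have "(\<Sum>x<d. \<Sum>y<d. Ge' i j x y) = (1-l)*(\<Sum>x<d. \<Sum>y<d. Ge i j x y) + (\<Sum>x<d. \<Sum>y<d. l / (real d)^2)"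
        unfolding Ge'_def by (simp add: sum.distrib sum_distrib_left)
      moreover have "(\<Sum>x<d. \<Sum>y<d. Ge i j x y) = 1" using A by blast
      ultimately show ?thesis using cd3 by simp
    qed
    ultimately show "case p of (i, j) \<Rightarrow>
          (\<forall>x<d. \<forall>y<d. 0 \<le> Ge' i j x y) \<and>
          (\<forall>x<d. (\<Sum>y<d. Ge' i j x y) = Gv' i x + (1 - l) * \<nu>1 i j x) \<and>
          (\<forall>y<d. (\<Sum>x<d. Ge' i j x y) = Gv' j y + (1 - l) * \<nu>1 j i y) \<and>
          (\<Sum>x<d. \<Sum>y<d. Ge' i j x y) = 1" using ij by simp
  qed
  show "lower_bounded n E d (l/(real d)^2) Gv' Ge'"
    unfolding lower_bounded_def
  proof (intro conjI)
    have "l/(real d)^2 \<le> l / real d"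
      using d l0 by (intro divide_left_mono) (auto simp: power2_eq_square)
    then show "\<forall>i\<in>{1..n}. \<forall>x<d. l / (real d)\<^sup>2 \<le> Gv' i x"
    proof (intro ballI allI impI)
      fix i x assume "i \<in> {1..n}" "x < d"
      then have "0 \<le> Gv i x" using L1 by auto
      then have "0 \<le> (1-l) * Gv i x" using l1 by simp
      then show "l / (real d)\<^sup>2 \<le> Gv' i x" using \<open>l/(real d)^2 \<le> l / real d\<close> by (simp add: Gv'_def)
    qed
    show "\<forall>(i, j)\<in>E. \<forall>x<d. \<forall>y<d. l / (real d)\<^sup>2 \<le> Ge' i j x y"
      using L2 l1 by (auto simp: Ge'_def)
  qed
  have V: "(\<Sum>i\<in>{1..n}. \<Sum>x<d. \<bar>Gv i x - Gv' i x\<bar>) \<le> real n * (2*l)"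
  proof -
    have "(\<Sum>i\<in>{1..n}. \<Sum>x<d. \<bar>Gv i x - Gv' i x\<bar>) \<le> real (card {1..n}) * (2*l)"
    proof (intro sum_bounded_above)
      fix i assume i: "i \<in> {1..n}"
      have "(\<Sum>x<d. \<bar>Gv i x - Gv' i x\<bar>) \<le> (\<Sum>x<d. l * Gv i x + l / real d)"
      proof (intro sum_mono)
        fix x assume "x \<in> {..<d}"
        then have "0 \<le> Gv i x" using L1 i by auto
        moreover have "\<bar>Gv i x - Gv' i x\<bar> = l * \<bar>Gv i x - 1/real d\<bar>"
        proof -
          have "Gv i x - Gv' i x = l * (Gv i x - 1/real d)" by (simp add: Gv'_def algebra_simps)
          then show ?thesis using l0 by (simp add: abs_mult)
        qed
        moreover have "\<bar>Gv i x - 1/real d\<bar> \<le> Gv i x + 1/real d"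
          proof -
          have "0 \<le> 1/real d" by simp
          then show ?thesis using \<open>0 \<le> Gv i x\<close> unfolding abs_le_iff by linarith
        qed
        ultimately have "\<bar>Gv i x - Gv' i x\<bar> \<le> l * (Gv i x + 1/real d)"
          using l0 by (simp add: mult_left_mono)
        then show "\<bar>Gv i x - Gv' i x\<bar> \<le> l * Gv i x + l / real d" by (simp add: algebra_simps)
      qed
      also have "\<dots> = 2*l" using L1 i cd by (simp add: sum.distrib sum_distrib_left[symmetric])
      finally show "(\<Sum>x<d. \<bar>Gv i x - Gv' i x\<bar>) \<le> 2*l" .
    qed
    then show ?thesis by simp
  qed
  have Ed: "(\<Sum>(i,j)\<in>E. \<Sum>x<d. \<Sum>y<d. \<bar>Ge i j x y - Ge' i j x y\<bar>) \<le> real (card E) * (2*l)"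
  proof (intro sum_bounded_above)
    fix p assume p: "p \<in> E"
    obtain i j where ij: "p = (i,j)" by force
    from L2 p ij have A: "(\<forall>x<d. \<forall>y<d. 0 \<le> Ge i j x y) \<and> (\<Sum>x<d. \<Sum>y<d. Ge i j x y) = 1" by auto
    have "(\<Sum>x<d. \<Sum>y<d. \<bar>Ge i j x y - Ge' i j x y\<bar>) \<le> (\<Sum>x<d. \<Sum>y<d. l * Ge i j x y + l / (real d)^2)"
    proof (intro sum_mono)
      fix x y assume "x \<in> {..<d}" "y \<in> {..<d}"
      then have "0 \<le> Ge i j x y" using A by auto
      moreover have "\<bar>Ge i j x y - Ge' i j x y\<bar> = l * \<bar>Ge i j x y - 1/(real d)^2\<bar>"
      proof -
        have "Ge i j x y - Ge' i j x y = l * (Ge i j x y - 1/(real d)^2)" by (simp add: Ge'_def algebra_simps)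
        then show ?thesis using l0 by (simp add: abs_mult)
      qed
      moreover have "\<bar>Ge i j x y - 1/(real d)^2\<bar> \<le> Ge i j x y + 1/(real d)^2"
        proof -
        have "0 \<le> 1/(real d)^2" by simp
        then show ?thesis using \<open>0 \<le> Ge i j x y\<close> unfolding abs_le_iff by linarith
      qed
      ultimately have "\<bar>Ge i j x y - Ge' i j x y\<bar> \<le> l * (Ge i j x y + 1/(real d)^2)"
        using l0 by (simp add: mult_left_mono)
      then show "\<bar>Ge i j x y - Ge' i j x y\<bar> \<le> l * Ge i j x y + l / (real d)^2" by (simp add: algebra_simps)
    qed
    also have "\<dots> = l * (\<Sum>x<d. \<Sum>y<d. Ge i j x y) + (\<Sum>x<d. \<Sum>y<d. l / (real d)^2)"
      by (simp add: sum.distrib sum_distrib_left)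
    also have "\<dots> = 2*l" using A cd3 by simp
    finally show "(case p of (i,j) \<Rightarrow> \<Sum>x<d. \<Sum>y<d. \<bar>Ge i j x y - Ge' i j x y\<bar>) \<le> 2*l" using ij by simp
  qed
  show "marg_dist1 n E d Gv Ge Gv' Ge' \<le> 2*l*(real (card E) + real n)"
    using V Ed unfolding marg_dist1_def by (simp add: algebra_simps)
qed



lemma L2nu_parts:
  assumes "in_L2nu n E d \<nu>1 Gv Ge"
  shows "\<And>i x. i \<in> {1..n} \<Longrightarrow> x < d \<Longrightarrow> 0 \<le> Gv i x"
    and "\<And>i. i \<in> {1..n} \<Longrightarrow> (\<Sum>x<d. Gv i x) = 1"
    and "\<And>i j. (i,j) \<in> E \<Longrightarrow> \<forall>x<d. \<forall>y<d. 0 \<le> Ge i j x y"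
    and "\<And>i j. (i,j) \<in> E \<Longrightarrow> \<forall>x<d. (\<Sum>y<d. Ge i j x y) = Gv i x + \<nu>1 i j x"
    and "\<And>i j. (i,j) \<in> E \<Longrightarrow> \<forall>y<d. (\<Sum>x<d. Ge i j x y) = Gv j y + \<nu>1 j i y"
    and "\<And>i j. (i,j) \<in> E \<Longrightarrow> (\<Sum>x<d. \<Sum>y<d. Ge i j x y) = 1"
  using assms by (fastforce simp: in_L2nu_def in_simplex_def)+

lemma fix_global:
  assumes L: "in_L2nu n E d \<nu>1 Gv Ge" and G: "E \<subseteq> {1..n} \<times> {1..n}"
    and nn: "\<forall>(i,j)\<in>E. \<forall>x<d. 0 \<le> Gv i x + \<nu>2 i j x \<and> 0 \<le> Gv j x + \<nu>2 j i x"
    and sv: "slack_vector E d \<nu>2"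
  shows "\<exists>Ge'. in_L2nu n E d \<nu>2 Gv Ge' \<and> marg_dist1 n E d Gv Ge Gv Ge'
     \<le> 2 * (\<Sum>(i,j)\<in>E. \<Sum>x<d. \<bar>\<nu>1 i j x - \<nu>2 i j x\<bar> + \<bar>\<nu>1 j i x - \<nu>2 j i x\<bar>)"
proof -
  note P = L2nu_parts[OF L]
  define R where "R p Q \<longleftrightarrow> (case p of (i,j) \<Rightarrow>
     (\<forall>x<d. \<forall>y<d. 0 \<le> Q x y) \<and> (\<forall>x<d. (\<Sum>y<d. Q x y) = Gv i x + \<nu>2 i j x)
     \<and> (\<forall>y<d. (\<Sum>x<d. Q x y) = Gv j y + \<nu>2 j i y)
     \<and> (\<Sum>x<d. \<Sum>y<d. \<bar>Ge i j x y - Q x y\<bar>) \<le> 2 * (\<Sum>x<d. \<bar>\<nu>1 i j x - \<nu>2 i j x\<bar> + \<bar>\<nu>1 j i x - \<nu>2 j i x\<bar>))"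
    for p Q
  have "\<forall>p\<in>E. \<exists>Q. R p Q"
  proof
    fix p assume p: "p \<in> E"
    obtain i j where ij: "p = (i,j)" by force
    have e: "(i,j) \<in> E" using p ij by simp
    have ij1: "i \<in> {1..n}" "j \<in> {1..n}" using G e by auto
    have s1: "(\<Sum>x<d. \<nu>2 i j x) = 0" "(\<Sum>x<d. \<nu>2 j i x) = 0" using sv e by (auto simp: slack_vector_def)
    have tot: "(\<Sum>x<d. \<Sum>y<d. Ge i j x y) = 1" using P(6)[OF e] .
    have "\<exists>Q. (\<forall>x<d. \<forall>y<d. 0 \<le> Q x y) \<and> (\<forall>x<d. (\<Sum>y<d. Q x y) = Gv i x + \<nu>2 i j x)
     \<and> (\<forall>y<d. (\<Sum>x<d. Q x y) = Gv j y + \<nu>2 j i y)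
     \<and> (\<Sum>x<d. \<Sum>y<d. \<bar>Ge i j x y - Q x y\<bar>) \<le> 2 * ((\<Sum>x<d. \<bar>(Gv i x + \<nu>1 i j x) - (Gv i x + \<nu>2 i j x)\<bar>)
          + (\<Sum>y<d. \<bar>(Gv j y + \<nu>1 j i y) - (Gv j y + \<nu>2 j i y)\<bar>))"
    proof (rule transport_fix)
      show "\<forall>x<d. \<forall>y<d. 0 \<le> Ge i j x y" using P(3)[OF e] .
      show "\<forall>x<d. (\<Sum>y<d. Ge i j x y) = Gv i x + \<nu>1 i j x" using P(4)[OF e] .
      show "\<forall>y<d. (\<Sum>x<d. Ge i j x y) = Gv j y + \<nu>1 j i y" using P(5)[OF e] .
      show "\<forall>x<d. 0 \<le> Gv i x + \<nu>2 i j x" using nn e by auto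
      show "\<forall>y<d. 0 \<le> Gv j y + \<nu>2 j i y" using nn e by auto
      show "(\<Sum>x<d. Gv i x + \<nu>2 i j x) = (\<Sum>x<d. \<Sum>y<d. Ge i j x y)"
        using tot s1 P(2)[OF ij1(1)] by (simp add: sum.distrib)
      show "(\<Sum>y<d. Gv j y + \<nu>2 j i y) = (\<Sum>x<d. \<Sum>y<d. Ge i j x y)"
        using tot s1 P(2)[OF ij1(2)] by (simp add: sum.distrib)
    qed
    then show "\<exists>Q. R p Q" unfolding R_def ij by (simp add: sum.distrib)
  qed
  then obtain Qf where Qf: "\<forall>p\<in>E. R p (Qf p)" by metis
  define Ge' where "Ge' i j = Qf (i,j)" for i j
  have RR: "R (i,j) (Ge' i j)" if "(i,j) \<in> E" for i j using Qf that by (simp add: Ge'_def)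
  have "in_L2nu n E d \<nu>2 Gv Ge'"
    unfolding in_L2nu_def
  proof (rule conjI; intro ballI)
    fix i assume "i \<in> {1..n}" then show "in_simplex d (Gv i)"
      using P(1,2) by (auto simp: in_simplex_def)
  next
    fix p assume p: "p \<in> E"
    obtain i j where ij: "p = (i,j)" by force
    have e: "(i,j) \<in> E" using p ij by simp
    have ij1: "i \<in> {1..n}" "j \<in> {1..n}" using G e by auto
    have s1: "(\<Sum>x<d. \<nu>2 i j x) = 0" using sv e by (auto simp: slack_vector_def)
    have R: "(\<forall>x<d. \<forall>y<d. 0 \<le> Ge' i j x y) \<and> (\<forall>x<d. (\<Sum>y<d. Ge' i j x y) = Gv i x + \<nu>2 i j x)
     \<and> (\<forall>y<d. (\<Sum>x<d. Ge' i j x y) = Gv j y + \<nu>2 j i y)" using RR[OF e] by (simp add: R_def)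
    have "(\<Sum>x<d. \<Sum>y<d. Ge' i j x y) = (\<Sum>x<d. Gv i x + \<nu>2 i j x)" using R by simp
    also have "\<dots> = 1" using s1 P(2)[OF ij1(1)] by (simp add: sum.distrib)
    finally show "case p of (i,j) \<Rightarrow> (\<forall>x<d. \<forall>y<d. 0 \<le> Ge' i j x y) \<and>
          (\<forall>x<d. (\<Sum>y<d. Ge' i j x y) = Gv i x + \<nu>2 i j x) \<and>
          (\<forall>y<d. (\<Sum>x<d. Ge' i j x y) = Gv j y + \<nu>2 j i y) \<and>
          (\<Sum>x<d. \<Sum>y<d. Ge' i j x y) = 1" using R ij by simp
  qed
  moreover have "marg_dist1 n E d Gv Ge Gv Ge'
     \<le> 2 * (\<Sum>(i,j)\<in>E. \<Sum>x<d. \<bar>\<nu>1 i j x - \<nu>2 i j x\<bar> + \<bar>\<nu>1 j i x - \<nu>2 j i x\<bar>)"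
  proof -
    have "(\<Sum>(i,j)\<in>E. \<Sum>x<d. \<Sum>y<d. \<bar>Ge i j x y - Ge' i j x y\<bar>)
       \<le> (\<Sum>(i,j)\<in>E. 2 * (\<Sum>x<d. \<bar>\<nu>1 i j x - \<nu>2 i j x\<bar> + \<bar>\<nu>1 j i x - \<nu>2 j i x\<bar>))"
      using RR by (intro sum_mono) (auto simp: R_def)
    then show ?thesis by (simp add: marg_dist1_def sum_distrib_left case_prod_unfold)
  qed
  ultimately show ?thesis by blast
qed

lemma nbr_sum:
  assumes G: "simple_graph n E"
  shows "(\<Sum>k\<in>{1..n}. \<Sum>l\<in>{l. (k,l)\<in>E \<or> (l,k)\<in>E}. h k l) = (\<Sum>(i,j)\<in>E. h i j + h j i)"
proof -
  have Es: "E \<subseteq> {1..n} \<times> {1..n}" and irr: "\<And>i j. (i,j)\<in>E \<Longrightarrow> (j,i) \<notin> E"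
    using G by (auto simp: simple_graph_def)
  have fE: "finite E" using Es finite_subset by blast
  have fN: "finite {l. (k,l)\<in>E \<or> (l,k)\<in>E}" for k
    by (rule finite_subset[of _ "{1..n}"]) (use Es in auto)
  have "(\<Sum>k\<in>{1..n}. \<Sum>l\<in>{l. (k,l)\<in>E \<or> (l,k)\<in>E}. h k l)
      = (\<Sum>p\<in>Sigma {1..n} (\<lambda>k. {l. (k,l)\<in>E \<or> (l,k)\<in>E}). h (fst p) (snd p))"
    using fN by (subst sum.Sigma) (auto simp: case_prod_unfold)
  also have "Sigma {1..n} (\<lambda>k. {l. (k,l)\<in>E \<or> (l,k)\<in>E}) = E \<union> prod.swap ` E"
    using Es by (auto simp: image_iff) (metis swap_simp)
  also have "(\<Sum>p\<in>E \<union> prod.swap ` E. h (fst p) (snd p))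
      = (\<Sum>p\<in>E. h (fst p) (snd p)) + (\<Sum>p\<in>prod.swap ` E. h (fst p) (snd p))"
    using fE irr by (intro sum.union_disjoint) auto
  also have "(\<Sum>p\<in>prod.swap ` E. h (fst p) (snd p)) = (\<Sum>p\<in>E. h (snd p) (fst p))"
    by (subst sum.reindex) (auto simp: inj_on_def)
  finally show ?thesis by (simp add: sum.distrib case_prod_unfold)
qed



lemma pm_global:
  assumes L: "in_L2 n E d Gv Ge" and G: "E \<subseteq> {1..n} \<times> {1..n}"
    and r0: "\<forall>i\<in>{1..n}. \<forall>x<d. 0 \<le> r i x" and lam: "\<forall>i\<in>{1..n}. (\<Sum>x<d. r i x) = lam i"
    and lam1: "\<forall>i\<in>{1..n}. lam i \<le> 1"
  defines "GvA \<equiv> \<lambda>i x. (1 - lam i)*Gv i x + r i x"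
    and "GeA \<equiv> \<lambda>i j x y. (1-lam i)*(1-lam j)*Ge i j x y + (1-lam j)*r i x*Gv j y + (1-lam i)*Gv i x*r j y + r i x*r j y"
  shows "in_L2 n E d GvA GeA"
    and "marg_dist1 n E d Gv Ge GvA GeA \<le> (\<Sum>i\<in>{1..n}. 2*lam i) + (\<Sum>(i,j)\<in>E. 2*(lam i + lam j))"
proof -
  have L': "in_L2nu n E d (\<lambda>_ _ _. 0) Gv Ge" using L by (simp add: in_L2_def)
  note P = L2nu_parts[OF L']
  have lam0: "0 \<le> lam i" if "i \<in> {1..n}" for i
    using lam r0 that by (metis lessThan_iff sum_nonneg)
  have PM: "(\<forall>x<d. \<forall>y<d. 0 \<le> GeA i j x y)
    \<and> (\<forall>x<d. (\<Sum>y<d. GeA i j x y) = GvA i x)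
    \<and> (\<forall>y<d. (\<Sum>x<d. GeA i j x y) = GvA j y)
    \<and> (\<Sum>x<d. \<Sum>y<d. \<bar>Ge i j x y - GeA i j x y\<bar>) \<le> 2*(lam i + lam j)" if e: "(i,j) \<in> E" for i j
  proof -
    have ij1: "i \<in> {1..n}" "j \<in> {1..n}" using G e by auto
    note pm = prod_mix[where P="Ge i j" and ma="Gv i" and mb="Gv j" and ra="r i" and rb="r j"
        and la="lam i" and lb="lam j" and d=d]
    have h: "\<forall>x<d. \<forall>y<d. 0 \<le> Ge i j x y" "\<forall>x<d. (\<Sum>y<d. Ge i j x y) = Gv i x"
      "\<forall>y<d. (\<Sum>x<d. Ge i j x y) = Gv j y" "\<forall>x<d. 0 \<le> Gv i x" "\<forall>y<d. 0 \<le> Gv j y"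
      "(\<Sum>x<d. Gv i x) = 1" "(\<Sum>y<d. Gv j y) = 1" "\<forall>x<d. 0 \<le> r i x" "\<forall>y<d. 0 \<le> r j y"
      "(\<Sum>x<d. r i x) = lam i" "(\<Sum>y<d. r j y) = lam j" "lam i \<le> 1" "lam j \<le> 1"
      using P e ij1 r0 lam lam1 by auto
    show ?thesis using pm(1-4)[OF h] unfolding GeA_def GvA_def by simp
  qed
  show "in_L2 n E d GvA GeA"
    unfolding in_L2_def in_L2nu_def
  proof (rule conjI; intro ballI)
    fix i assume i: "i \<in> {1..n}"
    have "\<forall>x<d. 0 \<le> GvA i x" using P(1) i r0 lam1 by (auto simp: GvA_def)
    moreover have "(\<Sum>x<d. GvA i x) = 1"
      using P(2)[OF i] lam i by (simp add: GvA_def sum.distrib sum_distrib_left[symmetric])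
    ultimately show "in_simplex d (GvA i)" by (simp add: in_simplex_def)
  next
    fix p assume p: "p \<in> E"
    obtain i j where ij: "p = (i,j)" by force
    have e: "(i,j) \<in> E" using p ij by simp
    have i1: "i \<in> {1..n}" using G e by auto
    have R: "(\<forall>x<d. \<forall>y<d. 0 \<le> GeA i j x y) \<and> (\<forall>x<d. (\<Sum>y<d. GeA i j x y) = GvA i x)
     \<and> (\<forall>y<d. (\<Sum>x<d. GeA i j x y) = GvA j y)" using PM[OF e] by simp
    have "(\<Sum>x<d. \<Sum>y<d. GeA i j x y) = (\<Sum>x<d. GvA i x)" using R by simp
    also have "\<dots> = 1"
      using P(2)[OF i1] lam i1 by (simp add: GvA_def sum.distrib sum_distrib_left[symmetric])
    finally show "case p of (i,j) \<Rightarrow> (\<forall>x<d. \<forall>y<d. 0 \<le> GeA i j x y) \<and>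
          (\<forall>x<d. (\<Sum>y<d. GeA i j x y) = GvA i x + 0) \<and>
          (\<forall>y<d. (\<Sum>x<d. GeA i j x y) = GvA j y + 0) \<and>
          (\<Sum>x<d. \<Sum>y<d. GeA i j x y) = 1" using R ij by simp
  qed
  have V: "(\<Sum>i\<in>{1..n}. \<Sum>x<d. \<bar>Gv i x - GvA i x\<bar>) \<le> (\<Sum>i\<in>{1..n}. 2*lam i)"
  proof (intro sum_mono)
    fix i assume i: "i \<in> {1..n}"
    show "(\<Sum>x<d. \<bar>Gv i x - GvA i x\<bar>) \<le> 2*lam i"
      unfolding GvA_def using P(1,2) i r0 lam lam0[OF i] by (intro vert_mix) auto
  qed
  have Ed: "(\<Sum>(i,j)\<in>E. \<Sum>x<d. \<Sum>y<d. \<bar>Ge i j x y - GeA i j x y\<bar>) \<le> (\<Sum>(i,j)\<in>E. 2*(lam i + lam j))"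
    using PM by (intro sum_mono) auto
  show "marg_dist1 n E d Gv Ge GvA GeA \<le> (\<Sum>i\<in>{1..n}. 2*lam i) + (\<Sum>(i,j)\<in>E. 2*(lam i + lam j))"
    using V Ed unfolding marg_dist1_def by linarith
qed



theorem lemma8:
  fixes n d :: nat and E :: "(nat \<times> nat) set" and \<tau> :: real
    and \<nu> :: "nat \<Rightarrow> nat \<Rightarrow> nat \<Rightarrow> real"
  assumes G: "simple_graph n E"
    and tau_pos: "0 < \<tau>" and tau_le: "\<tau> \<le> 1 / (8 * real d ^ 2)"
    and nu_slack: "slack_vector E d \<nu>"
    and nu_inf: "\<forall>(i,j)\<in>E. \<forall>x<d. \<bar>\<nu> i j x\<bar> \<le> 1 / (4 * real d) \<and> \<bar>\<nu> j i x\<bar> \<le> 1 / (4 * real d)"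
  shows
    "(\<forall>Gv Ge. in_L2nu n E d \<nu> Gv Ge \<longrightarrow>
        (\<exists>Gv' Ge'. in_L2 n E d Gv' Ge' \<and> lower_bounded n E d \<tau> Gv' Ge' \<and>
           marg_dist1 n E d Gv Ge Gv' Ge'
             \<le> 2 * slack_norm1 E d \<nu> + 2 * (real (card E) + real n) * real d ^ 2 * \<tau>))
     \<and>
     (\<forall>Gv Ge. in_L2 n E d Gv Ge \<longrightarrow>
        (\<exists>Gv' Ge'. in_L2nu n E d \<nu> Gv' Ge' \<and> lower_bounded n E d \<tau> Gv' Ge' \<and>
           marg_dist1 n E d Gv Ge Gv' Ge'
             \<le> 6 * real d * real (max_degree n E) * slack_norm1 E d \<nu>
                + 8 * (real (card E) + real n) * real d ^ 2 * \<tau>))"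
proof -
  have d0: "0 < d"
  proof (rule ccontr)
    assume "\<not> 0 < d" then have "d = 0" by simp
    then show False using tau_pos tau_le by simp
  qed
  have Es: "E \<subseteq> {1..n} \<times> {1..n}" using G by (simp add: simple_graph_def)
  have fE: "finite E" using Es finite_subset by blast
  have dd: "real d ^ 2 * \<tau> \<le> 1/8"
  proof -
    have "real d ^ 2 * \<tau> \<le> real d ^ 2 * (1 / (8 * real d ^ 2))"
      using tau_le by (intro mult_left_mono) auto
    also have "\<dots> = 1/8" using d0 by simp
    finally show ?thesis .
  qed
  define S where "S = slack_norm1 E d \<nu>"
  have S_alt: "S = (\<Sum>(i,j)\<in>E. \<Sum>x<d. \<bar>\<nu> i j x - 0\<bar> + \<bar>\<nu> j i x - 0\<bar>)"
    by (simp add: S_def slack_norm1_def)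
  have S0: "0 \<le> S" unfolding S_def slack_norm1_def
    by (intro sum_nonneg) (auto simp: case_prod_unfold intro!: sum_nonneg)
  have part1: "\<forall>Gv Ge. in_L2nu n E d \<nu> Gv Ge \<longrightarrow>
        (\<exists>Gv' Ge'. in_L2 n E d Gv' Ge' \<and> lower_bounded n E d \<tau> Gv' Ge' \<and>
           marg_dist1 n E d Gv Ge Gv' Ge'
             \<le> 2 * slack_norm1 E d \<nu> + 2 * (real (card E) + real n) * real d ^ 2 * \<tau>)"
  proof (intro allI impI)
    fix Gv Ge assume L: "in_L2nu n E d \<nu> Gv Ge"
    note P = L2nu_parts[OF L]
    have "\<exists>Ge'. in_L2nu n E d (\<lambda>_ _ _. 0) Gv Ge' \<and> marg_dist1 n E d Gv Ge Gv Ge'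
     \<le> 2 * (\<Sum>(i,j)\<in>E. \<Sum>x<d. \<bar>\<nu> i j x - 0\<bar> + \<bar>\<nu> j i x - 0\<bar>)"
    proof (rule fix_global[OF L Es])
      show "\<forall>(i,j)\<in>E. \<forall>x<d. 0 \<le> Gv i x + 0 \<and> 0 \<le> Gv j x + 0"
        using P(1) Es by fastforce
      show "slack_vector E d (\<lambda>_ _ _. 0)" by (simp add: slack_vector_def)
    qed
    then obtain Ge1 where L1: "in_L2nu n E d (\<lambda>_ _ _. 0) Gv Ge1"
      and D1: "marg_dist1 n E d Gv Ge Gv Ge1 \<le> 2 * S" using S_alt by auto
    define l where "l = real d ^ 2 * \<tau>"
    have l0: "0 \<le> l" "l \<le> 1" using dd tau_pos by (auto simp: l_def)
    note M = mix_global[OF L1 l0 d0]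
    define Gv' where "Gv' = (\<lambda>i x. (1 - l) * Gv i x + l / real d)"
    define Ge' where "Ge' = (\<lambda>i j x y. (1 - l) * Ge1 i j x y + l / (real d)\<^sup>2)"
    have M1: "in_L2nu n E d (\<lambda>i j x. (1 - l) * 0) Gv' Ge'" using M(1) unfolding Gv'_def Ge'_def .
    have M2: "lower_bounded n E d (l / (real d)\<^sup>2) Gv' Ge'" using M(2) unfolding Gv'_def Ge'_def .
    have M3: "marg_dist1 n E d Gv Ge1 Gv' Ge' \<le> 2 * l * (real (card E) + real n)"
      using M(3) unfolding Gv'_def Ge'_def .
    have "(\<lambda>i j x. (1 - l) * (0::real)) = (\<lambda>_ _ _. 0)" by simp
    then have "in_L2 n E d Gv' Ge'" using M1 by (simp add: in_L2_def)
    moreover have "l / (real d)^2 = \<tau>" using d0 by (simp add: l_def)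
    moreover have "marg_dist1 n E d Gv Ge Gv' Ge'
       \<le> 2 * slack_norm1 E d \<nu> + 2 * (real (card E) + real n) * real d ^ 2 * \<tau>"
    proof -
      have "marg_dist1 n E d Gv Ge Gv' Ge' \<le> marg_dist1 n E d Gv Ge Gv Ge1 + marg_dist1 n E d Gv Ge1 Gv' Ge'"
        by (rule dist_tri)
      moreover have "2 * l * (real (card E) + real n) = 2 * (real (card E) + real n) * real d ^ 2 * \<tau>"
        by (simp add: l_def)
      ultimately show ?thesis using D1 M3 unfolding S_def by linarith
    qed
    ultimately show "\<exists>Gv' Ge'. in_L2 n E d Gv' Ge' \<and> lower_bounded n E d \<tau> Gv' Ge' \<and>
           marg_dist1 n E d Gv Ge Gv' Ge'
             \<le> 2 * slack_norm1 E d \<nu> + 2 * (real (card E) + real n) * real d ^ 2 * \<tau>"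
      using M2 by metis
  qed
  define N where "N k = {l. (k,l)\<in>E \<or> (l,k)\<in>E}" for k
  have fN: "finite (N k)" for k
    by (rule finite_subset[of _ "{1..n}"]) (use Es in \<open>auto simp: N_def\<close>)
  define \<Delta> where "\<Delta> = max_degree n E"
  have cardN: "card (N k) \<le> \<Delta>" if "k \<in> {1..n}" for k
  proof -
    have "degree E k \<le> Max (degree E ` {1..n})" using that by (intro Max_ge) auto
    then show ?thesis by (simp add: \<Delta>_def max_degree_def degree_def N_def)
  qed
  define w where "w k x = Max (insert 0 ((\<lambda>l. \<bar>\<nu> k l x\<bar>) ` N k))" for k x
  have w0: "0 \<le> w k x" for k x unfolding w_def using fN by (intro Max_ge) auto
  have wge: "\<bar>\<nu> k l x\<bar> \<le> w k x" if "l \<in> N k" for k l x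
    unfolding w_def using fN that by (intro Max_ge) auto
  have wle: "w k x \<le> 1 / (4 * real d)" if "x < d" for k x
    unfolding w_def
  proof (subst Max_le_iff)
    show "finite (insert 0 ((\<lambda>l. \<bar>\<nu> k l x\<bar>) ` N k))" using fN by simp
    show "insert 0 ((\<lambda>l. \<bar>\<nu> k l x\<bar>) ` N k) \<noteq> {}" by simp
    show "\<forall>a\<in>insert 0 ((\<lambda>l. \<bar>\<nu> k l x\<bar>) ` N k). a \<le> 1 / (4 * real d)"
      using nu_inf that by (fastforce simp: N_def)
  qed
  have wsum: "w k x \<le> (\<Sum>l\<in>N k. \<bar>\<nu> k l x\<bar>)" for k x
  proof -
    have "w k x \<in> insert 0 ((\<lambda>l. \<bar>\<nu> k l x\<bar>) ` N k)" unfolding w_def using fN by (intro Max_in) auto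
    then show ?thesis
    proof
      assume "w k x = 0" then show ?thesis by (simp add: sum_nonneg)
    next
      assume "w k x \<in> (\<lambda>l. \<bar>\<nu> k l x\<bar>) ` N k"
      then obtain l where "l \<in> N k" "w k x = \<bar>\<nu> k l x\<bar>" by auto
      then show ?thesis using fN by (metis (no_types, lifting) abs_ge_zero member_le_sum)
    qed
  qed
  define W where "W k = (\<Sum>x<d. w k x)" for k
  have W0: "0 \<le> W k" for k unfolding W_def using w0 by (simp add: sum_nonneg)
  have W4: "W k \<le> 1/4" for k
  proof -
    have "W k \<le> real (card {..<d}) * (1 / (4 * real d))" unfolding W_def
      by (intro sum_bounded_above) (use wle in auto)
    also have "\<dots> = 1/4" using d0 by simp
    finally show ?thesis .
  qed
  have WS: "(\<Sum>k\<in>{1..n}. W k) \<le> S"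
  proof -
    have "(\<Sum>k\<in>{1..n}. W k) \<le> (\<Sum>k\<in>{1..n}. \<Sum>l\<in>N k. \<Sum>x<d. \<bar>\<nu> k l x\<bar>)"
    proof (intro sum_mono)
      fix k assume "k \<in> {1..n}"
      have "W k \<le> (\<Sum>x<d. \<Sum>l\<in>N k. \<bar>\<nu> k l x\<bar>)" unfolding W_def using wsum by (intro sum_mono) auto
      also have "\<dots> = (\<Sum>l\<in>N k. \<Sum>x<d. \<bar>\<nu> k l x\<bar>)" by (rule sum.swap)
      finally show "W k \<le> (\<Sum>l\<in>N k. \<Sum>x<d. \<bar>\<nu> k l x\<bar>)" .
    qed
    also have "\<dots> = (\<Sum>(i,j)\<in>E. (\<Sum>x<d. \<bar>\<nu> i j x\<bar>) + (\<Sum>x<d. \<bar>\<nu> j i x\<bar>))"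
      unfolding N_def by (rule nbr_sum[OF G])
    also have "\<dots> = S" by (simp add: S_def slack_norm1_def sum.distrib)
    finally show ?thesis .
  qed
  have WE: "(\<Sum>(i,j)\<in>E. W i + W j) \<le> real \<Delta> * S"
  proof -
    have "(\<Sum>(i,j)\<in>E. W i + W j) = (\<Sum>k\<in>{1..n}. \<Sum>l\<in>N k. W k)"
      unfolding N_def by (rule nbr_sum[OF G, symmetric])
    also have "\<dots> = (\<Sum>k\<in>{1..n}. real (card (N k)) * W k)" by simp
    also have "\<dots> \<le> (\<Sum>k\<in>{1..n}. real \<Delta> * W k)"
      using cardN W0 by (intro sum_mono mult_right_mono) auto
    also have "\<dots> = real \<Delta> * (\<Sum>k\<in>{1..n}. W k)" by (simp add: sum_distrib_left)
    also have "\<dots> \<le> real \<Delta> * S" using WS by (intro mult_left_mono) auto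
    finally show ?thesis .
  qed
  have final_arith: "(8 + 4 * real \<Delta>) * S \<le> 6 * real d * real \<Delta> * S"
  proof (cases "S = 0")
    case False
    then have Sp: "0 < S" using S0 by simp
    have "E \<noteq> {}" using False by (auto simp: S_def slack_norm1_def)
    then obtain i j where e: "(i,j) \<in> E" by auto
    have "j \<in> N i" using e by (simp add: N_def)
    then have "1 \<le> card (N i)" using fN by (metis One_nat_def card_gt_0_iff empty_iff less_eq_Suc_le)
    moreover have "i \<in> {1..n}" using e Es by auto
    ultimately have D1: "1 \<le> real \<Delta>" using cardN by force
    have "d \<noteq> 1"
    proof
      assume d1: "d = 1"
      have "S = 0" unfolding S_def slack_norm1_def
      proof (intro sum.neutral ballI)
        fix p assume p: "p \<in> E"
        obtain a b where ab: "p = (a,b)" by force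
        have "(\<Sum>x<d. \<nu> a b x) = 0" "(\<Sum>x<d. \<nu> b a x) = 0"
          using nu_slack p ab by (auto simp: slack_vector_def)
        then show "(case p of (i,j) \<Rightarrow> \<Sum>x<d. \<bar>\<nu> i j x\<bar> + \<bar>\<nu> j i x\<bar>) = 0" using d1 ab by simp
      qed
      then show False using False by simp
    qed
    then have "2 \<le> real d" using d0 by simp
    then have "12 * real \<Delta> \<le> 6 * real d * real \<Delta>" using D1 by (simp add: mult_right_mono)
    then have "8 + 4 * real \<Delta> \<le> 6 * real d * real \<Delta>" using D1 by linarith
    then show ?thesis using Sp by (intro mult_right_mono) auto
  qed simp
  have part2: "\<forall>Gv Ge. in_L2 n E d Gv Ge \<longrightarrow>
        (\<exists>Gv' Ge'. in_L2nu n E d \<nu> Gv' Ge' \<and> lower_bounded n E d \<tau> Gv' Ge' \<and>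
           marg_dist1 n E d Gv Ge Gv' Ge'
             \<le> 6 * real d * real (max_degree n E) * slack_norm1 E d \<nu>
                + 8 * (real (card E) + real n) * real d ^ 2 * \<tau>)"
  proof (intro allI impI)
    fix Gv Ge assume L: "in_L2 n E d Gv Ge"
    have L': "in_L2nu n E d (\<lambda>_ _ _. 0) Gv Ge" using L by (simp add: in_L2_def)
    note P = L2nu_parts[OF L']
    define r where "r k x = 2 * w k x" for k x
    define lam where "lam k = 2 * W k" for k
    define GvA where "GvA = (\<lambda>i x. (1 - lam i)*Gv i x + r i x)"
    define GeA where "GeA = (\<lambda>i j x y. (1-lam i)*(1-lam j)*Ge i j x y + (1-lam j)*r i x*Gv j y + (1-lam i)*Gv i x*r j y + r i x*r j y)"
    have r0: "\<forall>i\<in>{1..n}. \<forall>x<d. 0 \<le> r i x" using w0 by (simp add: r_def)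
    have lamr: "\<forall>i\<in>{1..n}. (\<Sum>x<d. r i x) = lam i" by (simp add: r_def lam_def W_def sum_distrib_left)
    have lam1: "\<forall>i\<in>{1..n}. lam i \<le> 1"
    proof
      fix i show "lam i \<le> 1" using W4[of i] by (simp add: lam_def)
    qed
    note PG = pm_global[OF L Es r0 lamr lam1]
    have A1: "in_L2nu n E d (\<lambda>_ _ _. 0) GvA GeA" using PG(1) unfolding GvA_def GeA_def in_L2_def .
    have A2: "marg_dist1 n E d Gv Ge GvA GeA \<le> (\<Sum>i\<in>{1..n}. 2*lam i) + (\<Sum>(i,j)\<in>E. 2*(lam i + lam j))"
      using PG(2) unfolding GvA_def GeA_def .
    have A3: "marg_dist1 n E d Gv Ge GvA GeA \<le> 4 * S + 4 * real \<Delta> * S"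
    proof -
      have "(\<Sum>i\<in>{1..n}. 2*lam i) = 4 * (\<Sum>i\<in>{1..n}. W i)" by (simp add: lam_def sum_distrib_left)
      moreover have "(\<Sum>(i,j)\<in>E. 2*(lam i + lam j)) = 4 * (\<Sum>(i,j)\<in>E. W i + W j)"
        by (simp add: lam_def sum_distrib_left case_prod_unfold algebra_simps)
      ultimately show ?thesis using A2 WS WE by linarith
    qed
    define l0 where "l0 = 4 * real d ^ 2 * \<tau>"
    have l0b: "0 \<le> l0" "l0 \<le> 1/2" using dd tau_pos by (auto simp: l0_def)
    define c where "c = 1 / (1 - l0)"
    have c1: "1 \<le> c" "c \<le> 2" using l0b by (auto simp: c_def field_simps)
    have GvA_ge: "2 * w i x \<le> GvA i x" if "i \<in> {1..n}" "x < d" for i x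
    proof -
      have "0 \<le> (1 - lam i) * Gv i x" using lam1 P(1) that by simp
      then show ?thesis by (simp add: GvA_def r_def)
    qed
    have cnu: "0 \<le> GvA i x + c * \<nu> i l x" if "i \<in> {1..n}" "x < d" "l \<in> N i" for i l x
    proof -
      have "c * \<bar>\<nu> i l x\<bar> \<le> 2 * \<bar>\<nu> i l x\<bar>" using c1 by (intro mult_right_mono) auto
      moreover have "\<bar>\<nu> i l x\<bar> \<le> w i x" using wge that by blast
      moreover have "- (c * \<bar>\<nu> i l x\<bar>) \<le> c * \<nu> i l x" using c1
        by (metis abs_ge_minus_self abs_mult abs_of_nonneg dual_order.trans minus_le_iff zero_le_one)
      ultimately show ?thesis using GvA_ge[OF that(1,2)] by linarith
    qed
    have "\<exists>Ge'. in_L2nu n E d (\<lambda>i j x. c * \<nu> i j x) GvA Ge' \<and> marg_dist1 n E d GvA GeA GvA Ge'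
     \<le> 2 * (\<Sum>(i,j)\<in>E. \<Sum>x<d. \<bar>0 - c * \<nu> i j x\<bar> + \<bar>0 - c * \<nu> j i x\<bar>)"
    proof (rule fix_global[OF A1 Es])
      show "\<forall>(i,j)\<in>E. \<forall>x<d. 0 \<le> GvA i x + c * \<nu> i j x \<and> 0 \<le> GvA j x + c * \<nu> j i x"
      proof (intro ballI allI impI, clarify)
        fix i j x assume e: "(i,j) \<in> E" and x: "x < d"
        have "i \<in> {1..n}" "j \<in> {1..n}" "j \<in> N i" "i \<in> N j" using e Es by (auto simp: N_def)
        then show "0 \<le> GvA i x + c * \<nu> i j x \<and> 0 \<le> GvA j x + c * \<nu> j i x" using cnu x by blast
      qed
      show "slack_vector E d (\<lambda>i j x. c * \<nu> i j x)"
        using nu_slack by (auto simp: slack_vector_def sum_distrib_left[symmetric])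
    qed
    then obtain Ge2 where C1: "in_L2nu n E d (\<lambda>i j x. c * \<nu> i j x) GvA Ge2"
      and C2: "marg_dist1 n E d GvA GeA GvA Ge2 \<le> 2 * (\<Sum>(i,j)\<in>E. \<Sum>x<d. \<bar>0 - c * \<nu> i j x\<bar> + \<bar>0 - c * \<nu> j i x\<bar>)"
      by blast
    have C3: "marg_dist1 n E d GvA GeA GvA Ge2 \<le> 4 * S"
    proof -
      have "(\<Sum>(i,j)\<in>E. \<Sum>x<d. \<bar>0 - c * \<nu> i j x\<bar> + \<bar>0 - c * \<nu> j i x\<bar>) = c * S"
        using c1 by (simp add: S_def slack_norm1_def sum_distrib_left case_prod_unfold abs_mult algebra_simps)
      moreover have "c * S \<le> 2 * S" using c1 S0 by (intro mult_right_mono) auto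
      ultimately show ?thesis using C2 by linarith
    qed
    have l01: "0 \<le> l0" "l0 \<le> 1" using l0b by auto
    note M = mix_global[OF C1 l01 d0]
    define Gv' where "Gv' = (\<lambda>i x. (1 - l0) * GvA i x + l0 / real d)"
    define Ge' where "Ge' = (\<lambda>i j x y. (1 - l0) * Ge2 i j x y + l0 / (real d)\<^sup>2)"
    have M1: "in_L2nu n E d (\<lambda>i j x. (1 - l0) * (c * \<nu> i j x)) Gv' Ge'" using M(1) unfolding Gv'_def Ge'_def .
    have M2: "lower_bounded n E d (l0 / (real d)\<^sup>2) Gv' Ge'" using M(2) unfolding Gv'_def Ge'_def .
    have M3: "marg_dist1 n E d GvA Ge2 Gv' Ge' \<le> 2 * l0 * (real (card E) + real n)"
      using M(3) unfolding Gv'_def Ge'_def .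
    have "(1 - l0) * c = 1" using l0b by (simp add: c_def)
    then have "(\<lambda>i j x. (1 - l0) * (c * \<nu> i j x)) = \<nu>" by (simp add: mult.assoc[symmetric])
    then have F1: "in_L2nu n E d \<nu> Gv' Ge'" using M1 by simp
    have "l0 / (real d)^2 = 4 * \<tau>" using d0 by (simp add: l0_def)
    then have F2: "lower_bounded n E d \<tau> Gv' Ge'" using M2 tau_pos
      unfolding lower_bounded_def by (smt (verit, best) case_prodI2 case_prod_conv)
    have F3: "marg_dist1 n E d Gv Ge Gv' Ge'
             \<le> 6 * real d * real (max_degree n E) * slack_norm1 E d \<nu>
                + 8 * (real (card E) + real n) * real d ^ 2 * \<tau>"
    proof -
      have "marg_dist1 n E d Gv Ge Gv' Ge' \<le> marg_dist1 n E d Gv Ge GvA GeA + marg_dist1 n E d GvA GeA Gv' Ge'"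
        by (rule dist_tri)
      moreover have "marg_dist1 n E d GvA GeA Gv' Ge' \<le> marg_dist1 n E d GvA GeA GvA Ge2 + marg_dist1 n E d GvA Ge2 Gv' Ge'"
        by (rule dist_tri)
      moreover have "2 * l0 * (real (card E) + real n) = 8 * (real (card E) + real n) * real d ^ 2 * \<tau>"
        by (simp add: l0_def)
      moreover have "6 * real d * real (max_degree n E) * slack_norm1 E d \<nu> = 6 * real d * real \<Delta> * S"
        by (simp add: \<Delta>_def S_def)
      moreover have "4*S + 4*real \<Delta>*S + 4*S \<le> 6*real d*real \<Delta>*S"
        using final_arith by (simp add: algebra_simps)
      ultimately show ?thesis using A3 C3 M3 by linarith
    qed
    show "\<exists>Gv' Ge'. in_L2nu n E d \<nu> Gv' Ge' \<and> lower_bounded n E d \<tau> Gv' Ge' \<and>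
           marg_dist1 n E d Gv Ge Gv' Ge'
             \<le> 6 * real d * real (max_degree n E) * slack_norm1 E d \<nu>
                + 8 * (real (card E) + real n) * real d ^ 2 * \<tau>"
      using F1 F2 F3 by blast
  qed
  show ?thesis using part1 part2 by blast
qed

end
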